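(* Let $\Theta$ and $\Theta'$ be causally complete spaces of input histories with $E^\Theta\cap E^{\Theta'}=\emptyset$. Then the parallel composition $\Theta\cup\Theta'$ and the sequential composition $\Theta\rightsquigarrow\Theta'$ are causally complete.
   Context: A partial function is a function $f$ with domain $\mathrm{dom}(f)$ a subset of an index set, values in given sets; ordered by restriction. Compatible = agreeing on common domain; a compatible set $\mathcal F$ has join $\bigvee\mathcal F$ (union); $k\vee h$ is the join of two compatible functions. $\Theta$ is $\vee$-prime if for compatible $\mathcal F\subseteq\Theta$ with $\bigvee\mathcal F\in\Theta$ we have $\bigvee\mathcal F\in\mathcal F$. A space of input histories is a finite $\vee$-prime set of partial functions; $E^\Theta=\bigcup_{h\in\Theta}\mathrm{dom}(h)$, $I^\Theta_\omega=\{h(\omega):h\in\Theta,\omega\in\mathrm{dom}(h)\}$, $\mathrm{Ext}(\Theta)=\{\bigvee\mathcal F:\emptyset\ne\mathcal F\subseteq\Theta\text{ compatible}\}$. Free-choice: maximal elements of $\mathrm{Ext}(\Theta)$ are exactly the total functions in $\prod_{\omega\in E^\Theta}I^\Theta_\omega$. $\mathrm{tips}_\Theta(h)=\mathrm{dom}(h)\setminus\bigcup\{\mathrm{dom}(k):k\in\mathrm{Ext}(\Theta),k<h\}$. Causally complete: free-choice and $|\mathrm{tips}_\Theta(h)|=1$ for all $h\in\Theta$. For spaces with disjoint event sets, the parallel composition is the union $\Theta\cup\Theta'$ and the sequential composition is $\Theta\rightsquigarrow\Theta'=\Theta\cup\{k\vee h':k\in\max\mathrm{Ext}(\Theta),\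 h'\in\Theta'\}$. *)

theory Defs
  imports Main
begin

text \<open>Partial functions from events 'e to values 'v are maps 'e \<rightharpoonup> 'v.
  The order is restriction (map_le).\<close>

definition compatible :: "('e \<rightharpoonup> 'v) set \<Rightarrow> bool" where
  "compatible F \<longleftrightarrow> (\<forall>f\<in>F. \<forall>g\<in>F. \<forall>\<omega>\<in>dom f \<inter> dom g. f \<omega> = g \<omega>)"

definition join :: "('e \<rightharpoonup> 'v) set \<Rightarrow> ('e \<rightharpoonup> 'v)" where
  "join F = (\<lambda>\<omega>. if \<exists>f\<in>F. \<omega> \<in> dom f
                 then (SOME f. f \<in> F \<and> \<omega> \<in> dom f) \<omega> else None)"

definition join2 :: "('e \<rightharpoonup> 'v) \<Rightarrow> ('e \<rightharpoonup> 'v) \<Rightarrow> ('e \<rightharpoonup> 'v)" where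
  "join2 k h = join {k, h}"

definition join_prime :: "('e \<rightharpoonup> 'v) set \<Rightarrow> bool" where
  "join_prime \<Theta> \<longleftrightarrow>
     (\<forall>F. F \<subseteq> \<Theta> \<longrightarrow> compatible F \<longrightarrow> join F \<in> \<Theta> \<longrightarrow> join F \<in> F)"

definition space_of_input_histories :: "('e \<rightharpoonup> 'v) set \<Rightarrow> bool" where
  "space_of_input_histories \<Theta> \<longleftrightarrow> finite \<Theta> \<and> join_prime \<Theta>"

definition events :: "('e \<rightharpoonup> 'v) set \<Rightarrow> 'e set" where
  "events \<Theta> = (\<Union>h\<in>\<Theta>. dom h)"

definition inputs :: "('e \<rightharpoonup> 'v) set \<Rightarrow> 'e \<Rightarrow> 'v set" where
  "inputs \<Theta> \<omega> = {v. \<exists>h\<in>\<Theta>. \<omega> \<in> dom h \<and> h \<omega> = Some v}"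

definition Ext :: "('e \<rightharpoonup> 'v) set \<Rightarrow> ('e \<rightharpoonup> 'v) set" where
  "Ext \<Theta> = {join F | F. F \<noteq> {} \<and> F \<subseteq> \<Theta> \<and> compatible F}"

definition maximals :: "('e \<rightharpoonup> 'v) set \<Rightarrow> ('e \<rightharpoonup> 'v) set" where
  "maximals S = {h \<in> S. \<forall>k\<in>S. h \<subseteq>\<^sub>m k \<longrightarrow> k = h}"

definition free_choice :: "('e \<rightharpoonup> 'v) set \<Rightarrow> bool" where
  "free_choice \<Theta> \<longleftrightarrow>
     maximals (Ext \<Theta>) =
       {h. dom h = events \<Theta> \<and> (\<forall>\<omega>\<in>events \<Theta>. the (h \<omega>) \<in> inputs \<Theta> \<omega>)}"

definition tips :: "('e \<rightharpoonup> 'v) set \<Rightarrow> ('e \<rightharpoonup> 'v) \<Rightarrow> 'e set" where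
  "tips \<Theta> h = dom h - (\<Union>{dom k | k. k \<in> Ext \<Theta> \<and> k \<subseteq>\<^sub>m h \<and> k \<noteq> h})"

definition causally_complete :: "('e \<rightharpoonup> 'v) set \<Rightarrow> bool" where
  "causally_complete \<Theta> \<longleftrightarrow> free_choice \<Theta> \<and> (\<forall>h\<in>\<Theta>. card (tips \<Theta> h) = 1)"

definition par_comp :: "('e \<rightharpoonup> 'v) set \<Rightarrow> ('e \<rightharpoonup> 'v) set \<Rightarrow> ('e \<rightharpoonup> 'v) set" where
  "par_comp \<Theta> \<Theta>' = \<Theta> \<union> \<Theta>'"

definition seq_comp :: "('e \<rightharpoonup> 'v) set \<Rightarrow> ('e \<rightharpoonup> 'v) set \<Rightarrow> ('e \<rightharpoonup> 'v) set" where
  "seq_comp \<Theta> \<Theta>' = \<Theta> \<union> {join2 k h' | k h'. k \<in> maximals (Ext \<Theta>) \<and> h' \<in> \<Theta>'}"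

end

theory Submission
  imports Defs
begin


lemma join_val: assumes "\<exists>f\<in>F. \<omega> \<in> dom f"
  obtains f where "f \<in> F" "\<omega> \<in> dom f" "join F \<omega> = f \<omega>"
proof -
  let ?f = "SOME f. f \<in> F \<and> \<omega> \<in> dom f"
  have "?f \<in> F \<and> \<omega> \<in> dom ?f" using assms by (metis (mono_tags, lifting) someI_ex)
  moreover have "join F \<omega> = ?f \<omega>" using assms unfolding join_def by simp
  ultimately show ?thesis using that by blast
qed

lemma dom_join: "dom (join F) = \<Union>(dom ` F)"
proof (intro equalityI subsetI)
  fix \<omega> assume a: "\<omega> \<in> dom (join F)"
  show "\<omega> \<in> \<Union>(dom ` F)"
  proof (rule ccontr)
    assume "\<omega> \<notin> \<Union>(dom ` F)"
    then have "join F \<omega> = None" unfolding join_def by auto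
    then show False using a by auto
  qed
next
  fix \<omega> assume "\<omega> \<in> \<Union>(dom ` F)"
  then have "\<exists>f\<in>F. \<omega> \<in> dom f" by blast
  then obtain f where "f \<in> F" "\<omega> \<in> dom f" "join F \<omega> = f \<omega>" by (rule join_val)
  then show "\<omega> \<in> dom (join F)" by auto
qed

lemma join_eq: assumes "\<forall>f\<in>F. f \<subseteq>\<^sub>m t" "dom t \<subseteq> \<Union>(dom ` F)"
  shows "join F = t"
proof
  fix \<omega>
  show "join F \<omega> = t \<omega>"
  proof (cases "\<exists>f\<in>F. \<omega> \<in> dom f")
    case True
    then obtain f where "f \<in> F" "\<omega> \<in> dom f" "join F \<omega> = f \<omega>" by (rule join_val)
    then show ?thesis using assms(1) by (simp add: map_le_def)
  next
    case False
    then have "\<omega> \<notin> dom t" using assms(2) by blast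
    then show ?thesis using False unfolding join_def by (auto simp: domIff)
  qed
qed

lemma join_le: assumes "\<forall>f\<in>F. f \<subseteq>\<^sub>m t" shows "join F \<subseteq>\<^sub>m t"
  unfolding map_le_def
proof
  fix \<omega> assume "\<omega> \<in> dom (join F)"
  then have "\<exists>f\<in>F. \<omega> \<in> dom f" using dom_join[of F] by (simp only: UN_iff)
  then obtain f where "f \<in> F" "\<omega> \<in> dom f" "join F \<omega> = f \<omega>" by (rule join_val)
  then show "join F \<omega> = t \<omega>" using assms unfolding map_le_def by metis
qed

lemma join_ge: assumes "compatible F" "f \<in> F" shows "f \<subseteq>\<^sub>m join F"
  unfolding map_le_def
proof
  fix \<omega> assume a: "\<omega> \<in> dom f"
  then have "\<exists>f\<in>F. \<omega> \<in> dom f" using assms by blast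
  then obtain g where "g \<in> F" "\<omega> \<in> dom g" "join F \<omega> = g \<omega>" by (rule join_val)
  then have "\<omega> \<in> dom f \<inter> dom g" using a by blast
  then show "f \<omega> = join F \<omega>" using assms \<open>g \<in> F\<close> \<open>join F \<omega> = g \<omega>\<close> unfolding compatible_def by metis
qed

lemma compat_le: assumes "\<forall>f\<in>F. f \<subseteq>\<^sub>m t" shows "compatible F"
  using assms unfolding compatible_def map_le_def by (metis IntD1 IntD2)

lemma join_single: "join {f} = f"
  by (rule join_eq) auto

lemma join2_add: assumes "dom k \<inter> dom h = {}" shows "join2 k h = k ++ h"
  unfolding join2_def
  apply (rule join_eq)
  using assms by (auto simp: map_le_def map_add_def split: option.splits)

lemma Ext_mono: "A \<subseteq> B \<Longrightarrow> Ext A \<subseteq> Ext B"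
  unfolding Ext_def by blast

lemma sub_Ext: "h \<in> A \<Longrightarrow> h \<in> Ext A"
  unfolding Ext_def
  apply (rule CollectI, rule exI[of _ "{h}"])
  by (auto simp: join_single compatible_def)

lemma Ext_dom: "e \<in> Ext X \<Longrightarrow> dom e \<subseteq> events X"
proof -
  assume "e \<in> Ext X"
  then obtain F where "e = join F" "F \<subseteq> X" unfolding Ext_def by blast
  then have "dom e = \<Union>(dom ` F)" using dom_join by simp
  then show ?thesis unfolding events_def using \<open>F \<subseteq> X\<close> by blast
qed

lemma Ext_finite: "finite X \<Longrightarrow> finite (Ext X)"
proof -
  assume "finite X"
  have "Ext X \<subseteq> join ` Pow X" unfolding Ext_def by blast
  then show ?thesis using \<open>finite X\<close> finite_subset by blast
qed

lemma finite_max_above: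
  assumes "finite S" "e \<in> S"
  shows "\<exists>m\<in>maximals S. e \<subseteq>\<^sub>m m"
proof -
  define U where "U = {k\<in>S. e \<subseteq>\<^sub>m k}"
  define c where "c = (\<lambda>k. card {j\<in>U. j \<subseteq>\<^sub>m k})"
  have fU: "finite U" "U \<noteq> {}" using assms unfolding U_def by (auto simp: map_le_refl)
  then have "Max (c ` U) \<in> c ` U" by simp
  then obtain m where m: "m \<in> U" "c m = Max (c ` U)" by auto
  have "m \<in> maximals S" unfolding maximals_def
  proof (safe)
    show "m \<in> S" using m U_def by auto
    fix k assume k: "k \<in> S" "m \<subseteq>\<^sub>m k"
    show "k = m"
    proof (rule ccontr)
      assume ne: "k \<noteq> m"
      have kU: "k \<in> U" using k m U_def map_le_trans by (auto)
      have sub: "{j\<in>U. j \<subseteq>\<^sub>m m} \<subset> {j\<in>U. j \<subseteq>\<^sub>m k}"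
        using k kU ne map_le_trans map_le_antisym map_le_refl by fastforce
      have "c m < c k" unfolding c_def
        by (rule psubset_card_mono) (use fU sub in auto)
      moreover have "c k \<le> Max (c ` U)" using fU kU by simp
      ultimately show False using m by simp
    qed
  qed
  then show ?thesis using m U_def by auto
qed

lemma le_dom_eq: "t \<subseteq>\<^sub>m k \<Longrightarrow> dom k \<subseteq> dom t \<Longrightarrow> k = t"
  unfolding map_le_def by (metis domIff ext subsetD)

definition TT where
  "TT X = {h. dom h = events X \<and> (\<forall>\<omega>\<in>events X. the (h \<omega>) \<in> inputs X \<omega>)}"

lemma fc_intro:
  assumes "TT X \<subseteq> Ext X" "\<forall>e\<in>Ext X. \<exists>t\<in>TT X. e \<subseteq>\<^sub>m t"
  shows "free_choice X"
  unfolding free_choice_def TT_def[symmetric]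
proof (intro equalityI subsetI)
  fix m assume m: "m \<in> maximals (Ext X)"
  then obtain t where t: "t \<in> TT X" "m \<subseteq>\<^sub>m t" using assms unfolding maximals_def by blast
  then have "t \<in> Ext X" using assms by blast
  then have "t = m" using m t unfolding maximals_def by blast
  then show "m \<in> TT X" using t(1) by (simp only:)
next
  fix t assume t: "t \<in> TT X"
  have tE: "t \<in> Ext X" using t assms(1) by blast
  have "\<forall>k\<in>Ext X. t \<subseteq>\<^sub>m k \<longrightarrow> k = t"
  proof (intro ballI impI)
    fix k assume "k \<in> Ext X" "t \<subseteq>\<^sub>m k"
    moreover have "dom k \<subseteq> dom t" using Ext_dom[OF \<open>k \<in> Ext X\<close>] t by (simp add: TT_def)
    ultimately show "k = t" using le_dom_eq by blast
  qed
  then show "t \<in> maximals (Ext X)" unfolding maximals_def using tE by blast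
qed

lemma TT_ne: "\<exists>t. t \<in> TT X"
proof -
  define t where "t = (\<lambda>\<omega>. if \<omega> \<in> events X then Some (SOME v. v \<in> inputs X \<omega>) else None)"
  have ne: "inputs X \<omega> \<noteq> {}" if w: "\<omega> \<in> events X" for \<omega>
  proof -
    obtain h where h: "h \<in> X" "\<omega> \<in> dom h" using w unfolding events_def by blast
    then obtain v where "h \<omega> = Some v" by blast
    then have "v \<in> inputs X \<omega>" using h unfolding inputs_def by blast
    then show ?thesis by blast
  qed
  have "dom t = events X" unfolding t_def dom_def by simp
  moreover have "\<forall>\<omega>\<in>events X. the (t \<omega>) \<in> inputs X \<omega>"
  proof
    fix \<omega> assume w: "\<omega> \<in> events X"
    then have "the (t \<omega>) = (SOME v. v \<in> inputs X \<omega>)" unfolding t_def by simp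
    then show "the (t \<omega>) \<in> inputs X \<omega>" using ne[OF w] by (simp add: some_in_eq)
  qed
  ultimately show ?thesis unfolding TT_def by blast
qed

lemma empty_notin: "space_of_input_histories X \<Longrightarrow> Map.empty \<notin> X"
proof
  assume s: "space_of_input_histories X" and e: "Map.empty \<in> X"
  have j: "join {} = Map.empty" unfolding join_def by simp
  have "compatible {}" unfolding compatible_def by simp
  moreover have p: "\<forall>F. F \<subseteq> X \<longrightarrow> compatible F \<longrightarrow> join F \<in> X \<longrightarrow> join F \<in> F"
    using s unfolding space_of_input_histories_def join_prime_def by blast
  moreover have "join {} \<in> X" by (subst j) (rule e)
  ultimately have "join {} \<in> {}" by blast
  then show False by simp
qed

lemma tips_sub:
  assumes "\<Theta> \<subseteq> X" "h \<in> \<Theta>" "\<forall>g\<in>X. dom g \<subseteq> dom h \<longrightarrow> g \<in> \<Theta>"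
  shows "tips X h = tips \<Theta> h"
proof -
  have "{k \<in> Ext X. k \<subseteq>\<^sub>m h} = {k \<in> Ext \<Theta>. k \<subseteq>\<^sub>m h}"
  proof (intro equalityI subsetI)
    fix k assume "k \<in> {k \<in> Ext X. k \<subseteq>\<^sub>m h}"
    then obtain F where F: "k = join F" "F \<noteq> {}" "F \<subseteq> X" "compatible F" "k \<subseteq>\<^sub>m h"
      unfolding Ext_def by auto
    have "F \<subseteq> \<Theta>"
    proof
      fix f assume "f \<in> F"
      then have "f \<subseteq>\<^sub>m h" using F join_ge map_le_trans by metis
      then show "f \<in> \<Theta>" using assms(3) F \<open>f \<in> F\<close> map_le_implies_dom_le by blast
    qed
    then show "k \<in> {k \<in> Ext \<Theta>. k \<subseteq>\<^sub>m h}" using F unfolding Ext_def by auto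
  qed (use Ext_mono[OF assms(1)] in auto)
  then show ?thesis unfolding tips_def by blast
qed



lemma TT_iff: "t \<in> TT X \<longleftrightarrow> dom t = events X \<and> (\<forall>\<omega>\<in>events X. the (t \<omega>) \<in> inputs X \<omega>)"
  unfolding TT_def by simp

lemma fc_intro2: "free_choice X \<Longrightarrow> maximals (Ext X) = TT X"
  unfolding free_choice_def TT_def by simp



lemma inputs_Un: "inputs (A \<union> B) \<omega> = inputs A \<omega> \<union> inputs B \<omega>"
  unfolding inputs_def by auto

lemma inputs_out: "\<omega> \<notin> events A \<Longrightarrow> inputs A \<omega> = {}"
  unfolding inputs_def events_def by auto

lemma events_Un: "events (A \<union> B) = events A \<union> events B"
  unfolding events_def by (rule UN_Un)

lemma le_add_left: "dom c \<inter> dom d = {} \<Longrightarrow> c \<subseteq>\<^sub>m c ++ d"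
  by (metis map_add_comm map_le_map_add)

lemma le_common: "f \<subseteq>\<^sub>m e \<Longrightarrow> k \<subseteq>\<^sub>m e \<Longrightarrow> dom f \<subseteq> dom k \<Longrightarrow> f \<subseteq>\<^sub>m k"
  unfolding map_le_def by (metis subsetD)

lemma compat_sub: "compatible F \<Longrightarrow> G \<subseteq> F \<Longrightarrow> compatible G"
  unfolding compatible_def by blast

lemma above_sub:
  assumes "\<forall>e\<in>Ext X. \<exists>t\<in>TT X. e \<subseteq>\<^sub>m t" "F \<subseteq> X" "compatible F"
  shows "\<exists>t\<in>TT X. \<forall>f\<in>F. f \<subseteq>\<^sub>m t"
proof (cases "F = {}")
  case True
  obtain t where "t \<in> TT X" using TT_ne by blast
  then show ?thesis using True by blast
next
  case False
  then have "join F \<in> Ext X" using assms(2,3) unfolding Ext_def by blast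
  then obtain t where "t \<in> TT X" "join F \<subseteq>\<^sub>m t" using assms by blast
  have "\<forall>f\<in>F. f \<subseteq>\<^sub>m t"
  proof
    fix f assume "f \<in> F"
    then have "f \<subseteq>\<^sub>m join F" by (rule join_ge[OF assms(3)])
    then show "f \<subseteq>\<^sub>m t" using \<open>join F \<subseteq>\<^sub>m t\<close> by (rule map_le_trans)
  qed
  then show ?thesis using \<open>t \<in> TT X\<close> by blast
qed

lemma TT_restrict:
  assumes "t \<in> TT X" "events X = events A \<union> events B"
    "\<And>\<omega>. inputs X \<omega> = inputs A \<omega> \<union> inputs B \<omega>" "events A \<inter> events B = {}"
  shows "t |` events A \<in> TT A"
proof -
  have "dom t = events X" using assms(1) by (simp add: TT_iff)
  then have "dom (t |` events A) = events A" using assms(2) by simp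
  moreover have "\<forall>\<omega>\<in>events A. the ((t |` events A) \<omega>) \<in> inputs A \<omega>"
  proof
    fix \<omega> assume w: "\<omega> \<in> events A"
    then have "\<omega> \<in> events X" using assms(2) by blast
    then have "the (t \<omega>) \<in> inputs X \<omega>" using assms(1) by (simp add: TT_iff)
    then have "the (t \<omega>) \<in> inputs A \<omega> \<union> inputs B \<omega>" using assms(3) by simp
    moreover have "\<omega> \<notin> events B" using w assms(4) by blast
    then have "inputs B \<omega> = {}" by (rule inputs_out)
    ultimately have "the (t \<omega>) \<in> inputs A \<omega>" by (metis Un_iff empty_iff)
    moreover have "(t |` events A) \<omega> = t \<omega>" using w by (rule restrict_in)
    ultimately show "the ((t |` events A) \<omega>) \<in> inputs A \<omega>" by (simp only:)
  qed
  ultimately show ?thesis by (simp add: TT_iff)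
qed

lemma TT_add:
  assumes "k \<in> TT A" "k' \<in> TT B" "events X = events A \<union> events B"
    "\<And>\<omega>. inputs X \<omega> = inputs A \<omega> \<union> inputs B \<omega>" "events A \<inter> events B = {}"
  shows "k ++ k' \<in> TT X"
proof -
  have dk: "dom k = events A" "dom k' = events B" using assms(1,2) by (simp_all add: TT_iff)
  then have "dom (k ++ k') = events X" using assms(3) by (simp add: Un_commute)
  moreover have "\<forall>\<omega>\<in>events X. the ((k ++ k') \<omega>) \<in> inputs X \<omega>"
  proof
    fix \<omega> assume w: "\<omega> \<in> events X"
    show "the ((k ++ k') \<omega>) \<in> inputs X \<omega>"
    proof (cases "\<omega> \<in> events B")
      case True
      then have "(k ++ k') \<omega> = k' \<omega>" using dk(2) by (simp add: map_add_dom_app_simps)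
      have "the (k' \<omega>) \<in> inputs B \<omega>" using True assms(2) by (simp add: TT_iff)
      then show ?thesis using \<open>(k ++ k') \<omega> = k' \<omega>\<close> assms(4) by simp
    next
      case False
      then have "(k ++ k') \<omega> = k \<omega>" using dk(2) by (simp add: map_add_dom_app_simps)
      have "\<omega> \<in> events A" using False w assms(3) by blast
      then have "the (k \<omega>) \<in> inputs A \<omega>" using assms(1) by (simp add: TT_iff)
      then show ?thesis using \<open>(k ++ k') \<omega> = k \<omega>\<close> assms(4) by simp
    qed
  qed
  ultimately show ?thesis by (simp add: TT_iff)
qed



lemma above_gen:
  assumes "space_of_input_histories X" "free_choice X"
  shows "\<forall>e\<in>Ext X. \<exists>t\<in>TT X. e \<subseteq>\<^sub>m t"
proof
  fix e assume e: "e \<in> Ext X"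
  have "finite X" using assms(1) unfolding space_of_input_histories_def by simp
  then have "finite (Ext X)" by (rule Ext_finite)
  then obtain m where "m \<in> maximals (Ext X)" "e \<subseteq>\<^sub>m m" using finite_max_above e by blast
  moreover have "maximals (Ext X) = TT X" using assms(2) by (rule fc_intro2)
  ultimately show "\<exists>t\<in>TT X. e \<subseteq>\<^sub>m t" by blast
qed

lemma in_inputs: "h \<in> X \<Longrightarrow> h \<omega> = Some v \<Longrightarrow> v \<in> inputs X \<omega>"
  unfolding inputs_def by (intro CollectI bexI[of _ h] conjI domI)

lemma in_events: "h \<in> X \<Longrightarrow> \<omega> \<in> dom h \<Longrightarrow> \<omega> \<in> events X"
  unfolding events_def by (rule UN_I[where B=dom])

lemma dom_sub: "h \<in> X \<Longrightarrow> dom h \<subseteq> events X"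
  unfolding events_def by blast

lemma dom_ne: "space_of_input_histories X \<Longrightarrow> h \<in> X \<Longrightarrow> dom h \<noteq> {}"
  using empty_notin by fastforce

lemma restrict_le: "t |` A \<subseteq>\<^sub>m t"
  unfolding map_le_def by simp

lemma ext_intro:
  assumes "G \<subseteq> X" "G \<noteq> {}" "\<forall>g\<in>G. g \<subseteq>\<^sub>m t" "dom t \<subseteq> \<Union>(dom ` G)"
  shows "t \<in> Ext X"
proof -
  have "join G = t" using assms(3,4) by (rule join_eq)
  moreover have "compatible G" using assms(3) by (rule compat_le)
  ultimately show ?thesis unfolding Ext_def using assms(1,2) by blast
qed

lemma max_Ext: "t \<in> maximals (Ext X) \<Longrightarrow> \<exists>F. t = join F \<and> F \<noteq> {} \<and> F \<subseteq> X \<and> compatible F"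
  unfolding maximals_def Ext_def by blast

definition Jset :: "('e \<rightharpoonup> 'v) set \<Rightarrow> ('e \<rightharpoonup> 'v) set \<Rightarrow> ('e \<rightharpoonup> 'v) set" where
  "Jset A B = {k ++ h' | k h'. k \<in> TT A \<and> h' \<in> B}"

lemma Jset_iff: "g \<in> Jset A B \<longleftrightarrow> (\<exists>k h'. g = k ++ h' \<and> k \<in> TT A \<and> h' \<in> B)"
  unfolding Jset_def by blast

context
  fixes \<Theta> \<Theta>' :: "('e \<rightharpoonup> 'v) set"
  assumes sp: "space_of_input_histories \<Theta>" and sp': "space_of_input_histories \<Theta>'"
    and cc: "causally_complete \<Theta>" and cc': "causally_complete \<Theta>'"
    and dj: "events \<Theta> \<inter> events \<Theta>' = {}"
begin

lemma fc: "free_choice \<Theta>" "free_choice \<Theta>'"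
  using cc cc' unfolding causally_complete_def by simp_all

lemma mx: "maximals (Ext \<Theta>) = TT \<Theta>" "maximals (Ext \<Theta>') = TT \<Theta>'"
  using fc fc_intro2 by blast+

lemma ab: "\<forall>e\<in>Ext \<Theta>. \<exists>t\<in>TT \<Theta>. e \<subseteq>\<^sub>m t" "\<forall>e\<in>Ext \<Theta>'. \<exists>t\<in>TT \<Theta>'. e \<subseteq>\<^sub>m t"
  using above_gen[OF sp fc(1)] above_gen[OF sp' fc(2)] by blast+

lemma TT_join: "t \<in> TT \<Theta> \<Longrightarrow> \<exists>F. t = join F \<and> F \<noteq> {} \<and> F \<subseteq> \<Theta> \<and> compatible F"
  "t \<in> TT \<Theta>' \<Longrightarrow> \<exists>F. t = join F \<and> F \<noteq> {} \<and> F \<subseteq> \<Theta>' \<and> compatible F"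
  using max_Ext mx by blast+

lemma dom_TT: "t \<in> TT \<Theta> \<Longrightarrow> dom t = events \<Theta>" "t \<in> TT \<Theta>' \<Longrightarrow> dom t = events \<Theta>'"
  by (simp_all add: TT_iff)

lemma tips1: "h \<in> \<Theta> \<Longrightarrow> card (tips \<Theta> h) = 1" "h \<in> \<Theta>' \<Longrightarrow> card (tips \<Theta>' h) = 1"
  using cc cc' unfolding causally_complete_def by blast+

lemma two_parts:
  assumes "t |` events \<Theta> \<in> TT \<Theta>" "t |` events \<Theta>' \<in> TT \<Theta>'"
    "dom t \<subseteq> events \<Theta> \<union> events \<Theta>'"
  shows "\<exists>F F'. F \<noteq> {} \<and> F \<subseteq> \<Theta> \<and> compatible F \<and> t |` events \<Theta> = join F
     \<and> F' \<noteq> {} \<and> F' \<subseteq> \<Theta>' \<and> compatible F' \<and> t |` events \<Theta>' = join F'"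
  using TT_join assms by metis

subsection \<open>Parallel\<close>

lemma E_par: "events (par_comp \<Theta> \<Theta>') = events \<Theta> \<union> events \<Theta>'"
  unfolding par_comp_def by (rule events_Un)

lemma I_par: "inputs (par_comp \<Theta> \<Theta>') \<omega> = inputs \<Theta> \<omega> \<union> inputs \<Theta>' \<omega>"
  unfolding par_comp_def by (rule inputs_Un)

lemma dj': "events \<Theta>' \<inter> events \<Theta> = {}" using dj by blast

lemma par_a: "t \<in> TT (par_comp \<Theta> \<Theta>') \<Longrightarrow> t \<in> Ext (par_comp \<Theta> \<Theta>')"
proof -
  assume t: "t \<in> TT (par_comp \<Theta> \<Theta>')"
  have r1: "t |` events \<Theta> \<in> TT \<Theta>" using TT_restrict[OF t E_par I_par dj] .
  have r2: "t |` events \<Theta>' \<in> TT \<Theta>'"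
  proof (rule TT_restrict[OF t _ _ dj'])
    show "events (par_comp \<Theta> \<Theta>') = events \<Theta>' \<union> events \<Theta>" using E_par by blast
    show "inputs (par_comp \<Theta> \<Theta>') \<omega> = inputs \<Theta>' \<omega> \<union> inputs \<Theta> \<omega>" for \<omega>
      using I_par by blast
  qed
  obtain F where F: "F \<noteq> {}" "F \<subseteq> \<Theta>" "compatible F" "t |` events \<Theta> = join F"
    using TT_join(1)[OF r1] by metis
  obtain F' where F': "F' \<noteq> {}" "F' \<subseteq> \<Theta>'" "compatible F'" "t |` events \<Theta>' = join F'"
    using TT_join(2)[OF r2] by metis
  have dt: "dom t = events \<Theta> \<union> events \<Theta>'" using t E_par by (simp add: TT_iff)
  show ?thesis
  proof (rule ext_intro[of "F \<union> F'"])
    show "F \<union> F' \<subseteq> par_comp \<Theta> \<Theta>'" unfolding par_comp_def using F F' by blast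
    show "F \<union> F' \<noteq> {}" using F by blast
    show "\<forall>g\<in>F \<union> F'. g \<subseteq>\<^sub>m t"
    proof
      fix g assume "g \<in> F \<union> F'"
      then show "g \<subseteq>\<^sub>m t"
      proof
        assume "g \<in> F"
        then have "g \<subseteq>\<^sub>m join F" using F(3) join_ge by blast
        then show ?thesis using F(4) restrict_le map_le_trans by metis
      next
        assume "g \<in> F'"
        then have "g \<subseteq>\<^sub>m join F'" using F'(3) join_ge by blast
        then show ?thesis using F'(4) restrict_le map_le_trans by metis
      qed
    qed
    have "dom (join F) = \<Union>(dom ` F)" "dom (join F') = \<Union>(dom ` F')" by (rule dom_join)+
    moreover have "dom (t |` events \<Theta>) = events \<Theta>" "dom (t |` events \<Theta>') = events \<Theta>'"
      using dt by auto
    ultimately show "dom t \<subseteq> \<Union>(dom ` (F \<union> F'))" using dt F(4) F'(4) by auto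
  qed
qed

lemma par_b: "e \<in> Ext (par_comp \<Theta> \<Theta>') \<Longrightarrow> \<exists>t\<in>TT (par_comp \<Theta> \<Theta>'). e \<subseteq>\<^sub>m t"
proof -
  assume "e \<in> Ext (par_comp \<Theta> \<Theta>')"
  then obtain F where F: "e = join F" "F \<subseteq> \<Theta> \<union> \<Theta>'" "compatible F"
    unfolding Ext_def par_comp_def by blast
  have c1: "compatible (F \<inter> \<Theta>)" using compat_sub[OF F(3)] by blast
  have c2: "compatible (F \<inter> \<Theta>')" using compat_sub[OF F(3)] by blast
  obtain t1 where t1: "t1 \<in> TT \<Theta>" "\<forall>f\<in>F \<inter> \<Theta>. f \<subseteq>\<^sub>m t1"
    using above_sub[OF ab(1) _ c1] by blast
  obtain t2 where t2: "t2 \<in> TT \<Theta>'" "\<forall>f\<in>F \<inter> \<Theta>'. f \<subseteq>\<^sub>m t2"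
    using above_sub[OF ab(2) _ c2] by blast
  have tt: "t1 ++ t2 \<in> TT (par_comp \<Theta> \<Theta>')" using TT_add[OF t1(1) t2(1) E_par I_par dj] .
  have ddj: "dom t1 \<inter> dom t2 = {}" using dom_TT t1 t2 dj by simp
  have "\<forall>f\<in>F. f \<subseteq>\<^sub>m t1 ++ t2"
  proof
    fix f assume "f \<in> F"
    then have "f \<in> F \<inter> \<Theta> \<or> f \<in> F \<inter> \<Theta>'" using F(2) by blast
    then show "f \<subseteq>\<^sub>m t1 ++ t2"
    proof
      assume "f \<in> F \<inter> \<Theta>"
      then have "f \<subseteq>\<^sub>m t1" using t1 by blast
      then show ?thesis using le_add_left[OF ddj] map_le_trans by blast
    next
      assume "f \<in> F \<inter> \<Theta>'"
      then have "f \<subseteq>\<^sub>m t2" using t2 by blast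
      then show ?thesis using map_le_map_add map_le_trans by blast
    qed
  qed
  then have "e \<subseteq>\<^sub>m t1 ++ t2" using F(1) join_le by blast
  then show ?thesis using tt by blast
qed

lemma par_tips: "h \<in> par_comp \<Theta> \<Theta>' \<Longrightarrow> card (tips (par_comp \<Theta> \<Theta>') h) = 1"
proof -
  assume "h \<in> par_comp \<Theta> \<Theta>'"
  then have "h \<in> \<Theta> \<or> h \<in> \<Theta>'" unfolding par_comp_def by blast
  then show ?thesis
  proof
    assume h: "h \<in> \<Theta>"
    have "\<forall>g\<in>par_comp \<Theta> \<Theta>'. dom g \<subseteq> dom h \<longrightarrow> g \<in> \<Theta>"
    proof (intro ballI impI)
      fix g assume g: "g \<in> par_comp \<Theta> \<Theta>'" "dom g \<subseteq> dom h"
      show "g \<in> \<Theta>"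
      proof (rule ccontr)
        assume "g \<notin> \<Theta>"
        then have "g \<in> \<Theta>'" using g unfolding par_comp_def by blast
        then have "dom g \<subseteq> events \<Theta>'" "dom g \<noteq> {}" using dom_sub dom_ne[OF sp'] by blast+
        moreover have "dom h \<subseteq> events \<Theta>" using h dom_sub by blast
        ultimately show False using g(2) dj by blast
      qed
    qed
    then have "tips (par_comp \<Theta> \<Theta>') h = tips \<Theta> h"
      using tips_sub[of \<Theta> "par_comp \<Theta> \<Theta>'" h] h unfolding par_comp_def by blast
    then show ?thesis using tips1(1)[OF h] by simp
  next
    assume h: "h \<in> \<Theta>'"
    have "\<forall>g\<in>par_comp \<Theta> \<Theta>'. dom g \<subseteq> dom h \<longrightarrow> g \<in> \<Theta>'"
    proof (intro ballI impI)
      fix g assume g: "g \<in> par_comp \<Theta> \<Theta>'" "dom g \<subseteq> dom h"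
      show "g \<in> \<Theta>'"
      proof (rule ccontr)
        assume "g \<notin> \<Theta>'"
        then have "g \<in> \<Theta>" using g unfolding par_comp_def by blast
        then have "dom g \<subseteq> events \<Theta>" "dom g \<noteq> {}" using dom_sub dom_ne[OF sp] by blast+
        moreover have "dom h \<subseteq> events \<Theta>'" using h dom_sub by blast
        ultimately show False using g(2) dj by blast
      qed
    qed
    then have "tips (par_comp \<Theta> \<Theta>') h = tips \<Theta>' h"
      using tips_sub[of \<Theta>' "par_comp \<Theta> \<Theta>'" h] h unfolding par_comp_def by blast
    then show ?thesis using tips1(2)[OF h] by simp
  qed
qed

lemma par_cc: "causally_complete (par_comp \<Theta> \<Theta>')"
  unfolding causally_complete_def
  using fc_intro[of "par_comp \<Theta> \<Theta>'"] par_a par_b par_tips by blast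

subsection \<open>Sequential\<close>

lemma seq_eq: "seq_comp \<Theta> \<Theta>' = \<Theta> \<union> Jset \<Theta> \<Theta>'"
proof -
  have "{join2 k h' | k h'. k \<in> maximals (Ext \<Theta>) \<and> h' \<in> \<Theta>'} = Jset \<Theta> \<Theta>'"
  proof (intro equalityI subsetI)
    fix g assume "g \<in> {join2 k h' | k h'. k \<in> maximals (Ext \<Theta>) \<and> h' \<in> \<Theta>'}"
    then obtain k h' where g: "g = join2 k h'" "k \<in> TT \<Theta>" "h' \<in> \<Theta>'" using mx by blast
    have d: "dom k \<inter> dom h' = {}" using dom_TT(1)[OF g(2)] dom_sub[OF g(3)] dj by blast
    have "g = k ++ h'" using g(1) join2_add[OF d] by simp
    then show "g \<in> Jset \<Theta> \<Theta>'" using g Jset_iff by blast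
  next
    fix g assume "g \<in> Jset \<Theta> \<Theta>'"
    then obtain k h' where g: "g = k ++ h'" "k \<in> TT \<Theta>" "h' \<in> \<Theta>'" using Jset_iff by blast
    have d: "dom k \<inter> dom h' = {}" using dom_TT(1)[OF g(2)] dom_sub[OF g(3)] dj by blast
    have "g = join2 k h'" using g(1) join2_add[OF d] by simp
    then show "g \<in> {join2 k h' | k h'. k \<in> maximals (Ext \<Theta>) \<and> h' \<in> \<Theta>'}" using g mx by blast
  qed
  then show ?thesis unfolding seq_comp_def by simp
qed

abbreviation "S \<equiv> \<Theta> \<union> Jset \<Theta> \<Theta>'"

lemma J_dom: "g \<in> Jset \<Theta> \<Theta>' \<Longrightarrow> \<exists>k h'. g = k ++ h' \<and> k \<in> TT \<Theta> \<and> h' \<in> \<Theta>'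
   \<and> dom k = events \<Theta> \<and> dom h' \<subseteq> events \<Theta>' \<and> dom h' \<noteq> {} \<and> dom k \<inter> dom h' = {}"
proof -
  assume "g \<in> Jset \<Theta> \<Theta>'"
  then obtain k h' where g: "g = k ++ h'" "k \<in> TT \<Theta>" "h' \<in> \<Theta>'" using Jset_iff by blast
  have "dom k = events \<Theta>" using dom_TT(1)[OF g(2)] .
  moreover have "dom h' \<subseteq> events \<Theta>'" using dom_sub[OF g(3)] .
  moreover have "dom h' \<noteq> {}" using dom_ne[OF sp' g(3)] .
  ultimately show ?thesis using g dj by blast
qed

lemma E_seq: "events S = events \<Theta> \<union> events \<Theta>'"
proof -
  have e1: "events S = events \<Theta> \<union> events (Jset \<Theta> \<Theta>')" by (rule events_Un)
  have e2: "events (Jset \<Theta> \<Theta>') \<subseteq> events \<Theta> \<union> events \<Theta>'"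
  proof
    fix \<omega> assume "\<omega> \<in> events (Jset \<Theta> \<Theta>')"
    then obtain g where "g \<in> Jset \<Theta> \<Theta>'" "\<omega> \<in> dom g" unfolding events_def by blast
    then obtain k h' where "g = k ++ h'" "dom k = events \<Theta>" "dom h' \<subseteq> events \<Theta>'"
      using J_dom by metis
    then show "\<omega> \<in> events \<Theta> \<union> events \<Theta>'" using \<open>\<omega> \<in> dom g\<close> by auto
  qed
  have e3: "events \<Theta>' \<subseteq> events (Jset \<Theta> \<Theta>')"
  proof
    fix \<omega> assume "\<omega> \<in> events \<Theta>'"
    then obtain h' where h': "h' \<in> \<Theta>'" "\<omega> \<in> dom h'" unfolding events_def by blast
    obtain k0 where k0: "k0 \<in> TT \<Theta>" using TT_ne by blast
    have "k0 ++ h' \<in> Jset \<Theta> \<Theta>'" using k0 h' Jset_iff by blast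
    moreover have "\<omega> \<in> dom (k0 ++ h')" using h' by simp
    ultimately show "\<omega> \<in> events (Jset \<Theta> \<Theta>')" by (rule in_events)
  qed
  have "events \<Theta> \<union> events (Jset \<Theta> \<Theta>') \<subseteq> events \<Theta> \<union> events \<Theta>'"
    by (rule Un_least[OF Un_upper1 e2])
  moreover have "events \<Theta> \<union> events \<Theta>' \<subseteq> events \<Theta> \<union> events (Jset \<Theta> \<Theta>')"
    by (rule Un_mono[OF subset_refl e3])
  ultimately show ?thesis unfolding e1 by (rule equalityI)
qed

lemma I_seq: "inputs S \<omega> = inputs \<Theta> \<omega> \<union> inputs \<Theta>' \<omega>"
proof -
  have e1: "inputs S \<omega> = inputs \<Theta> \<omega> \<union> inputs (Jset \<Theta> \<Theta>') \<omega>" by (rule inputs_Un)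
  have e2: "inputs (Jset \<Theta> \<Theta>') \<omega> \<subseteq> inputs \<Theta> \<omega> \<union> inputs \<Theta>' \<omega>"
  proof
    fix v assume "v \<in> inputs (Jset \<Theta> \<Theta>') \<omega>"
    then obtain g where g: "g \<in> Jset \<Theta> \<Theta>'" "g \<omega> = Some v" unfolding inputs_def by blast
    then obtain k h' where kh: "g = k ++ h'" "k \<in> TT \<Theta>" "h' \<in> \<Theta>'" "dom k = events \<Theta>"
      using J_dom by metis
    show "v \<in> inputs \<Theta> \<omega> \<union> inputs \<Theta>' \<omega>"
    proof (cases "\<omega> \<in> dom h'")
      case True
      then have "h' \<omega> = Some v" using g(2) kh(1) by (simp add: map_add_dom_app_simps)
      then have "v \<in> inputs \<Theta>' \<omega>" using kh(3) in_inputs by metis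
      then show ?thesis by blast
    next
      case False
      then have kv: "k \<omega> = Some v" using g(2) kh(1) by (simp add: map_add_dom_app_simps)
      then have w: "\<omega> \<in> events \<Theta>" using kh(4) by blast
      then have "the (k \<omega>) \<in> inputs \<Theta> \<omega>" using kh(2) by (simp add: TT_iff)
      then have "v \<in> inputs \<Theta> \<omega>" using kv by simp
      then show ?thesis by blast
    qed
  qed
  have e3: "inputs \<Theta>' \<omega> \<subseteq> inputs (Jset \<Theta> \<Theta>') \<omega>"
  proof
    fix v assume "v \<in> inputs \<Theta>' \<omega>"
    then obtain h' where h': "h' \<in> \<Theta>'" "h' \<omega> = Some v" unfolding inputs_def by blast
    obtain k0 where k0: "k0 \<in> TT \<Theta>" using TT_ne by blast
    have "k0 ++ h' \<in> Jset \<Theta> \<Theta>'" using k0 h' Jset_iff by blast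
    moreover have "(k0 ++ h') \<omega> = Some v" using h' by simp
    ultimately show "v \<in> inputs (Jset \<Theta> \<Theta>') \<omega>" by (rule in_inputs)
  qed
  have "inputs \<Theta> \<omega> \<union> inputs (Jset \<Theta> \<Theta>') \<omega> \<subseteq> inputs \<Theta> \<omega> \<union> inputs \<Theta>' \<omega>"
    by (rule Un_least[OF Un_upper1 e2])
  moreover have "inputs \<Theta> \<omega> \<union> inputs \<Theta>' \<omega> \<subseteq> inputs \<Theta> \<omega> \<union> inputs (Jset \<Theta> \<Theta>') \<omega>"
    by (rule Un_mono[OF subset_refl e3])
  ultimately show ?thesis unfolding e1 by (rule equalityI)
qed

lemma seq_a: "t \<in> TT S \<Longrightarrow> t \<in> Ext S"
proof -
  assume t: "t \<in> TT S"
  have r1: "t |` events \<Theta> \<in> TT \<Theta>" using TT_restrict[OF t E_seq I_seq dj] .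
  have r2: "t |` events \<Theta>' \<in> TT \<Theta>'"
  proof (rule TT_restrict[OF t _ _ dj'])
    show "events S = events \<Theta>' \<union> events \<Theta>" using E_seq by blast
    show "inputs S \<omega> = inputs \<Theta>' \<omega> \<union> inputs \<Theta> \<omega>" for \<omega>
      using I_seq by blast
  qed
  define k where "k = t |` events \<Theta>"
  obtain F' where F': "F' \<noteq> {}" "F' \<subseteq> \<Theta>'" "compatible F'" "t |` events \<Theta>' = join F'"
    using TT_join(2)[OF r2] by metis
  have dt: "dom t = events \<Theta> \<union> events \<Theta>'" using t E_seq by (simp add: TT_iff)
  have dk: "dom k = events \<Theta>" unfolding k_def by (rule dom_TT(1)[OF r1])
  show ?thesis
  proof (rule ext_intro[of "(\<lambda>f. k ++ f) ` F'"])
    show "(\<lambda>f. k ++ f) ` F' \<subseteq> S"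
    proof
      fix g assume "g \<in> (\<lambda>f. k ++ f) ` F'"
      then obtain f where "f \<in> F'" "g = k ++ f" by blast
      then have "g \<in> Jset \<Theta> \<Theta>'" using F'(2) r1 k_def Jset_iff by blast
      then show "g \<in> S" by blast
    qed
    show "(\<lambda>f. k ++ f) ` F' \<noteq> {}" using F'(1) by blast
    show "\<forall>g\<in>(\<lambda>f. k ++ f) ` F'. g \<subseteq>\<^sub>m t"
    proof
      fix g assume "g \<in> (\<lambda>f. k ++ f) ` F'"
      then obtain f where f: "f \<in> F'" "g = k ++ f" by blast
      have "f \<subseteq>\<^sub>m join F'" using F'(3) f(1) by (rule join_ge)
      then have "f \<subseteq>\<^sub>m t" using F'(4) restrict_le map_le_trans by metis
      moreover have "k \<subseteq>\<^sub>m t" unfolding k_def by (rule restrict_le)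
      ultimately show "g \<subseteq>\<^sub>m t" using f(2) map_add_le_mapI by metis
    qed
    show "dom t \<subseteq> \<Union>(dom ` (\<lambda>f. k ++ f) ` F')"
    proof
      fix \<omega> assume w: "\<omega> \<in> dom t"
      show "\<omega> \<in> \<Union>(dom ` (\<lambda>f. k ++ f) ` F')"
      proof (cases "\<omega> \<in> events \<Theta>")
        case True
        obtain f0 where "f0 \<in> F'" using F'(1) by blast
        have "\<omega> \<in> dom (k ++ f0)" using True dk by simp
        have "k ++ f0 \<in> (\<lambda>f. k ++ f) ` F'" using \<open>f0 \<in> F'\<close> by (rule imageI)
        then show ?thesis using \<open>\<omega> \<in> dom (k ++ f0)\<close> by (rule UN_I[where B=dom])
      next
        case False
        then have "\<omega> \<in> dom (t |` events \<Theta>')" using w dt by simp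
        then have "\<omega> \<in> dom (join F')" by (simp only: F'(4))
        then have "\<omega> \<in> \<Union>(dom ` F')" by (simp only: dom_join)
        then obtain f where "f \<in> F'" "\<omega> \<in> dom f" by blast
        have "\<omega> \<in> dom (k ++ f)" using \<open>\<omega> \<in> dom f\<close> by simp
        have "k ++ f \<in> (\<lambda>f. k ++ f) ` F'" using \<open>f \<in> F'\<close> by (rule imageI)
        then show ?thesis using \<open>\<omega> \<in> dom (k ++ f)\<close> by (rule UN_I[where B=dom])
      qed
    qed
  qed
qed

lemma seq_b: "e \<in> Ext S \<Longrightarrow> \<exists>t\<in>TT S. e \<subseteq>\<^sub>m t"
proof -
  assume "e \<in> Ext S"
  then obtain F where F: "e = join F" "F \<subseteq> S" "compatible F"
    unfolding Ext_def by blast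
  have fe: "\<forall>f\<in>F. f \<subseteq>\<^sub>m e" using F(1) join_ge[OF F(3)] by blast
  show ?thesis
  proof (cases "F \<subseteq> \<Theta>")
    case True
    obtain t1 where t1: "t1 \<in> TT \<Theta>" "\<forall>f\<in>F. f \<subseteq>\<^sub>m t1"
      using above_sub[OF ab(1) True F(3)] by blast
    obtain t2 where t2: "t2 \<in> TT \<Theta>'" using TT_ne by blast
    have tt: "t1 ++ t2 \<in> TT S" using TT_add[OF t1(1) t2(1) E_seq I_seq dj] .
    have ddj: "dom t1 \<inter> dom t2 = {}" using dom_TT t1 t2 dj by simp
    have "\<forall>f\<in>F. f \<subseteq>\<^sub>m t1 ++ t2"
    proof
      fix f assume "f \<in> F"
      then have "f \<subseteq>\<^sub>m t1" using t1 by blast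
      then show "f \<subseteq>\<^sub>m t1 ++ t2" using le_add_left[OF ddj] map_le_trans by blast
    qed
    then have "e \<subseteq>\<^sub>m t1 ++ t2" using F(1) join_le by blast
    then show ?thesis using tt by blast
  next
    case False
    then obtain g where g: "g \<in> F" "g \<notin> \<Theta>" by blast
    then have "g \<in> Jset \<Theta> \<Theta>'" using F(2) by blast
    then obtain k0 h0 where kh0: "g = k0 ++ h0" "k0 \<in> TT \<Theta>" "h0 \<in> \<Theta>'"
      "dom k0 = events \<Theta>" "dom h0 \<subseteq> events \<Theta>'" "dom k0 \<inter> dom h0 = {}"
      using J_dom by metis
    have k0e: "k0 \<subseteq>\<^sub>m e"
    proof -
      have "k0 \<subseteq>\<^sub>m g" using kh0(1) le_add_left[OF kh0(6)] by simp
      moreover have "g \<subseteq>\<^sub>m e" using fe g(1) by blast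
      ultimately show ?thesis by (rule map_le_trans)
    qed
    define F' where "F' = {h' \<in> \<Theta>'. k0 ++ h' \<in> F}"
    have F'e: "\<forall>h'\<in>F'. h' \<subseteq>\<^sub>m e"
    proof
      fix h' assume "h' \<in> F'"
      then have "k0 ++ h' \<in> F" unfolding F'_def by blast
      then have "k0 ++ h' \<subseteq>\<^sub>m e" using fe by blast
      moreover have "h' \<subseteq>\<^sub>m k0 ++ h'" by (rule map_le_map_add)
      ultimately show "h' \<subseteq>\<^sub>m e" using map_le_trans by blast
    qed
    have "F' \<subseteq> \<Theta>'" unfolding F'_def by blast
    moreover have "compatible F'" using F'e by (rule compat_le)
    ultimately obtain t' where t': "t' \<in> TT \<Theta>'" "\<forall>h'\<in>F'. h' \<subseteq>\<^sub>m t'"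
      using above_sub[OF ab(2)] by blast
    have tt: "k0 ++ t' \<in> TT S" using TT_add[OF kh0(2) t'(1) E_seq I_seq dj] .
    have ddj: "dom k0 \<inter> dom t' = {}" using dom_TT kh0(2) t'(1) dj by simp
    have k0t: "k0 \<subseteq>\<^sub>m k0 ++ t'" by (rule le_add_left[OF ddj])
    have "\<forall>f\<in>F. f \<subseteq>\<^sub>m k0 ++ t'"
    proof
      fix f assume f: "f \<in> F"
      then have "f \<in> \<Theta> \<or> f \<in> Jset \<Theta> \<Theta>'" using F(2) by blast
      then show "f \<subseteq>\<^sub>m k0 ++ t'"
      proof
        assume "f \<in> \<Theta>"
        then have "dom f \<subseteq> dom k0" using dom_sub kh0(4) by blast
        then have "f \<subseteq>\<^sub>m k0" using le_common fe f k0e by blast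
        then show ?thesis using k0t map_le_trans by blast
      next
        assume "f \<in> Jset \<Theta> \<Theta>'"
        then obtain k1 h1 where kh1: "f = k1 ++ h1" "k1 \<in> TT \<Theta>" "h1 \<in> \<Theta>'"
          "dom k1 = events \<Theta>" "dom k1 \<inter> dom h1 = {}"
          using J_dom by metis
        have "k1 \<subseteq>\<^sub>m f" using kh1(1) le_add_left[OF kh1(5)] by simp
        then have k1e: "k1 \<subseteq>\<^sub>m e" using fe f map_le_trans by blast
        have "k1 \<subseteq>\<^sub>m k0" using le_common[OF k1e k0e] kh1(4) kh0(4) by simp
        moreover have "k0 \<subseteq>\<^sub>m k1" using le_common[OF k0e k1e] kh1(4) kh0(4) by simp
        ultimately have "k1 = k0" by (rule map_le_antisym)
        then have "k0 ++ h1 \<in> F" using f kh1(1) by simp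
        then have "h1 \<in> F'" unfolding F'_def using kh1(3) by blast
        then have "h1 \<subseteq>\<^sub>m t'" using t'(2) by blast
        then have "h1 \<subseteq>\<^sub>m k0 ++ t'" using map_le_map_add map_le_trans by blast
        then show ?thesis using kh1(1) \<open>k1 = k0\<close> k0t map_add_le_mapI by metis
      qed
    qed
    then have "e \<subseteq>\<^sub>m k0 ++ t'" using F(1) join_le by blast
    then show ?thesis using tt by blast
  qed
qed

lemma set_aux: "E \<subseteq> Y \<Longrightarrow> U \<subseteq> Y \<Longrightarrow> Y \<subseteq> E \<union> U \<Longrightarrow> H = E \<union> D \<Longrightarrow> E \<inter> D = {} \<Longrightarrow> H - Y = D - U"
  by blast

lemma seq_tips_J:
  assumes h: "h = k ++ h'" "k \<in> TT \<Theta>" "h' \<in> \<Theta>'"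
  shows "tips S h = tips \<Theta>' h'"
proof -
  define SS where "SS = \<Union>{dom j | j. j \<in> Ext S \<and> j \<subseteq>\<^sub>m h \<and> j \<noteq> h}"
  define U where "U = \<Union>{dom k' | k'. k' \<in> Ext \<Theta>' \<and> k' \<subseteq>\<^sub>m h' \<and> k' \<noteq> h'}"
  have dk: "dom k = events \<Theta>" using dom_TT(1)[OF h(2)] .
  have dh': "dom h' \<subseteq> events \<Theta>'" using dom_sub[OF h(3)] .
  have neh': "dom h' \<noteq> {}" using dom_ne[OF sp' h(3)] .
  have dkh: "dom k \<inter> dom h' = {}" using dk dh' dj by blast
  have kh: "k \<subseteq>\<^sub>m h" using h(1) le_add_left[OF dkh] by simp
  have h'h: "h' \<subseteq>\<^sub>m h" using h(1) map_le_map_add by simp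
  have domh: "dom h = events \<Theta> \<union> dom h'" using h(1) dk by auto
  have c1: "events \<Theta> \<subseteq> SS"
  proof -
    have "k \<in> Ext \<Theta>" using h(2) mx(1) unfolding maximals_def by blast
    then have "k \<in> Ext S" using Ext_mono[of \<Theta> S] by blast
    moreover have "k \<noteq> h"
    proof
      assume "k = h"
      then have "dom h' \<subseteq> dom k" using domh dk by blast
      then show False using dkh neh' by blast
    qed
    ultimately have "dom k \<in> {dom j | j. j \<in> Ext S \<and> j \<subseteq>\<^sub>m h \<and> j \<noteq> h}" using kh by blast
    then show ?thesis unfolding SS_def using dk by blast
  qed
  have c2: "U \<subseteq> SS"
  proof
    fix \<omega> assume "\<omega> \<in> U"
    then obtain k' where k': "k' \<in> Ext \<Theta>'" "k' \<subseteq>\<^sub>m h'" "k' \<noteq> h'" "\<omega> \<in> dom k'"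
      unfolding U_def by blast
    then obtain F' where F': "k' = join F'" "F' \<subseteq> \<Theta>'" "compatible F'" unfolding Ext_def by blast
    have "\<omega> \<in> \<Union>(dom ` F')" using k'(4) F'(1) dom_join by metis
    then obtain f where f: "f \<in> F'" "\<omega> \<in> dom f" by blast
    have fk: "f \<subseteq>\<^sub>m k'" using F'(1) join_ge[OF F'(3) f(1)] by simp
    then have fh': "f \<subseteq>\<^sub>m h'" using k'(2) map_le_trans by blast
    have fne: "f \<noteq> h'"
    proof
      assume "f = h'"
      then have "h' \<subseteq>\<^sub>m k'" using fk by simp
      then show False using k'(2,3) map_le_antisym by blast
    qed
    have "k ++ f \<in> Jset \<Theta> \<Theta>'" using h(2) F'(2) f(1) Jset_iff by blast
    then have "k ++ f \<in> S" by blast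
    then have jE: "k ++ f \<in> Ext S" by (rule sub_Ext)
    have "f \<subseteq>\<^sub>m h" using fh' h'h map_le_trans by blast
    then have jle: "k ++ f \<subseteq>\<^sub>m h" using kh map_add_le_mapI by blast
    have jne: "k ++ f \<noteq> h"
    proof
      assume eq: "k ++ f = h"
      have "f = h'"
      proof
        fix x
        show "f x = h' x"
        proof (cases "x \<in> dom h'")
          case True
          then have "x \<notin> dom k" using dkh by blast
          then have "(k ++ f) x = f x" "h x = h' x" using h(1) by (simp_all add: map_add_dom_app_simps)
          then show ?thesis using eq by simp
        next
          case False
          then have "x \<notin> dom f" using fh' map_le_implies_dom_le by blast
          then show ?thesis using False by (simp add: domIff)
        qed
      qed
      then show False using fne by simp
    qed
    have "\<omega> \<in> dom (k ++ f)" using f(2) by simp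
    have "dom (k ++ f) \<in> {dom j | j. j \<in> Ext S \<and> j \<subseteq>\<^sub>m h \<and> j \<noteq> h}"
      using jE jle jne by blast
    then show "\<omega> \<in> SS" unfolding SS_def using \<open>\<omega> \<in> dom (k ++ f)\<close> by (rule UnionI)
  qed
  have c3: "SS \<subseteq> events \<Theta> \<union> U"
  proof
    fix \<omega> assume "\<omega> \<in> SS"
    then obtain j where j: "j \<in> Ext S" "j \<subseteq>\<^sub>m h" "j \<noteq> h" "\<omega> \<in> dom j"
      unfolding SS_def by blast
    then obtain F where F: "j = join F" "F \<subseteq> S" "compatible F" unfolding Ext_def by blast
    have "\<omega> \<in> \<Union>(dom ` F)" using j(4) F(1) dom_join by metis
    then obtain g where g: "g \<in> F" "\<omega> \<in> dom g" by blast
    have gj: "g \<subseteq>\<^sub>m j" using F(1) join_ge[OF F(3) g(1)] by simp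
    then have gh: "g \<subseteq>\<^sub>m h" using j(2) map_le_trans by blast
    show "\<omega> \<in> events \<Theta> \<union> U"
    proof (cases "\<omega> \<in> events \<Theta>")
      case True then show ?thesis by blast
    next
      case False
      have "g \<notin> \<Theta>" using False g(2) dom_sub by blast
      then have "g \<in> Jset \<Theta> \<Theta>'" using g(1) F(2) by blast
      then obtain k1 h1 where kh1: "g = k1 ++ h1" "k1 \<in> TT \<Theta>" "h1 \<in> \<Theta>'"
          "dom k1 = events \<Theta>" "dom k1 \<inter> dom h1 = {}"
          using J_dom by metis
      have wh1: "\<omega> \<in> dom h1" using g(2) kh1(1,4) False by auto
      have h1g: "h1 \<subseteq>\<^sub>m g" using kh1(1) map_le_map_add by simp
      then have h1h: "h1 \<subseteq>\<^sub>m h" using gh map_le_trans by blast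
      have "dom h1 \<subseteq> dom h" using h1h map_le_implies_dom_le by blast
      then have "dom h1 \<subseteq> dom h'" using domh kh1(4,5) by blast
      then have h1h': "h1 \<subseteq>\<^sub>m h'" using le_common[OF h1h h'h] by blast
      have "h1 \<noteq> h'"
      proof
        assume "h1 = h'"
        have "k1 \<subseteq>\<^sub>m g" using kh1(1) le_add_left[OF kh1(5)] by simp
        then have "k1 \<subseteq>\<^sub>m h" using gh map_le_trans by blast
        then have "k1 \<subseteq>\<^sub>m k" "k \<subseteq>\<^sub>m k1" using le_common kh kh1(4) dk by (metis order_refl)+
        then have "k1 = k" by (rule map_le_antisym)
        then have "g = h" using kh1(1) \<open>h1 = h'\<close> h(1) by simp
        then have "h \<subseteq>\<^sub>m j" using gj by simp
        then show False using j(2,3) map_le_antisym by blast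
      qed
      moreover have "h1 \<in> Ext \<Theta>'" using kh1(3) by (rule sub_Ext)
      ultimately have "\<omega> \<in> U" unfolding U_def using h1h' wh1 by blast
      then show ?thesis by blast
    qed
  qed
  have "tips S h = dom h - SS" unfolding tips_def SS_def by simp
  moreover have "tips \<Theta>' h' = dom h' - U" unfolding tips_def U_def by simp
  moreover have "dom h - SS = dom h' - U"
  proof (rule set_aux[OF c1 c2 c3 domh])
    show "events \<Theta> \<inter> dom h' = {}" using dkh dk by simp
  qed
  ultimately show ?thesis by simp
qed

lemma seq_tips: "h \<in> S \<Longrightarrow> card (tips S h) = 1"
proof -
  assume "h \<in> S"
  then have "h \<in> \<Theta> \<or> h \<in> Jset \<Theta> \<Theta>'" by blast
  then show ?thesis
  proof
    assume h: "h \<in> \<Theta>"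
    have "\<forall>g\<in>S. dom g \<subseteq> dom h \<longrightarrow> g \<in> \<Theta>"
    proof (intro ballI impI)
      fix g assume g: "g \<in> S" "dom g \<subseteq> dom h"
      show "g \<in> \<Theta>"
      proof (rule ccontr)
        assume "g \<notin> \<Theta>"
        then have "g \<in> Jset \<Theta> \<Theta>'" using g by blast
        then obtain k1 h1 where kh1: "g = k1 ++ h1" "dom h1 \<subseteq> events \<Theta>'" "dom h1 \<noteq> {}"
          using J_dom by metis
        have "dom h1 \<subseteq> dom g" using kh1(1) by auto
        moreover have "dom h \<subseteq> events \<Theta>" using h dom_sub by blast
        ultimately show False using g(2) kh1(2,3) dj by blast
      qed
    qed
    then have "tips S h = tips \<Theta> h"
      using tips_sub[of \<Theta> S h] h by blast
    then show ?thesis using tips1(1)[OF h] by simp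
  next
    assume "h \<in> Jset \<Theta> \<Theta>'"
    then obtain k h' where kh: "h = k ++ h'" "k \<in> TT \<Theta>" "h' \<in> \<Theta>'" using Jset_iff by blast
    then have "tips S h = tips \<Theta>' h'" by (rule seq_tips_J)
    then show ?thesis using tips1(2)[OF kh(3)] by simp
  qed
qed

lemma seq_cc: "causally_complete (seq_comp \<Theta> \<Theta>')"
  unfolding causally_complete_def seq_eq
  using fc_intro[of S] seq_a seq_b seq_tips by blast

end

theorem proposition17:
  fixes \<Theta> \<Theta>' :: "('e \<rightharpoonup> 'v) set"
  assumes "space_of_input_histories \<Theta>" and "space_of_input_histories \<Theta>'"
    and "causally_complete \<Theta>" and "causally_complete \<Theta>'"
    and "events \<Theta> \<inter> events \<Theta>' = {}"
  shows "causally_complete (par_comp \<Theta> \<Theta>') \<and> causally_complete (seq_comp \<Theta> \<Theta>')"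
  using par_cc[OF assms] seq_cc[OF assms] by blast

end
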